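(* Let $K$ be a division ring and $M,N\ge2$ integers. Suppose $G$ is a torsion-free group and $c,d\in K[G]$ of ranks $M$ and $N$ respectively both contain the identity of $G$ in their supports and satisfy $cd=1$. Write $c=r_0c_0+\dots+r_{M-1}c_{M-1}$ and $d=s_0d_0+\dots+s_{N-1}d_{N-1}$ with pairwise distinct $c_i\in G$, pairwise distinct $d_j\in G$, nonzero $r_i,s_j\in K$ and $c_0=d_0=1$. Let $\sigma$ be the partition of $\{0,\dots,M-1\}\times\{0,\dots,N-1\}$ with $(i,j)\sim_\sigma(i',j')$ iff $c_id_j=c_{i'}d_{j'}$, and let $\pi\le\sigma$ be any partition realizable with $r_0,\dots,r_{M-1},s_0,\dots,s_{N-1}$. Suppose that for all $(m,n)$ with $2\le m\le M$, $2\le n\le N$, $(m,n)\ne(M,N)$, there is no torsion-free group $G'$ and $x,y\in K[G']$ with $\operatorname{rank}(x)=m$, $\operatorname{rank}(y)=n$, $xy=1$. Then $\pi$ has no proper invariant subgrids.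
   Context: $K[G]$ is the group ring; the rank of an element is the number of group elements with nonzero coefficient. $\pi\le\sigma$ means every block of $\pi$ is contained in a block of $\sigma$; $(i,j)\sim_\pi(i',j')$ means same block. $\pi$ is realizable with nonzero $r_i,s_j\in K$ if for each block $E$, $\sum_{(i,j)\in E}r_is_j$ equals $1$ if $(0,0)\in E$, else $0$. An invariant subgrid of a partition $\pi$ of $\{0,\dots,M-1\}\times\{0,\dots,N-1\}$ is a pair $(R,C)$ with $0\in R\subseteq\{0,\dots,M-1\}$, $0\in C\subseteq\{0,\dots,N-1\}$, $|R|\ge2$, $|C|\ge2$, such that whenever $(i,j)\in R\times C$ and $(i,j)\sim_\pi(i',j')$ then $(i',j')\in R\times C$; it is proper if $|R|<M$ or $|C|<N$. *)

theory Defs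
  imports "HOL-Algebra.Group" "HOL-Library.Disjoint_Sets"
begin

definition torsion_free :: "('g, 'b) monoid_scheme \<Rightarrow> bool" where
  "torsion_free G \<longleftrightarrow> group G \<and>
     (\<forall>x\<in>carrier G. \<forall>n::nat. n > 0 \<and> x [^]\<^bsub>G\<^esub> n = \<one>\<^bsub>G\<^esub> \<longrightarrow> x = \<one>\<^bsub>G\<^esub>)"

definition gsupp :: "('g \<Rightarrow> 'k::zero) \<Rightarrow> 'g set" where
  "gsupp a = {g. a g \<noteq> 0}"

definition grp_ring_elem :: "('g, 'b) monoid_scheme \<Rightarrow> ('g \<Rightarrow> 'k::zero) \<Rightarrow> bool" where
  "grp_ring_elem G a \<longleftrightarrow> finite (gsupp a) \<and> gsupp a \<subseteq> carrier G"

definition grank :: "('g \<Rightarrow> 'k::zero) \<Rightarrow> nat" where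
  "grank a = card (gsupp a)"

definition gr_mult :: "('g, 'b) monoid_scheme \<Rightarrow> ('g \<Rightarrow> 'k::ring) \<Rightarrow> ('g \<Rightarrow> 'k) \<Rightarrow> 'g \<Rightarrow> 'k" where
  "gr_mult G a b g =
     (\<Sum>p\<in>{(h, k). h \<in> gsupp a \<and> k \<in> gsupp b \<and> h \<otimes>\<^bsub>G\<^esub> k = g}. a (fst p) * b (snd p))"

definition gr_one :: "('g, 'b) monoid_scheme \<Rightarrow> 'g \<Rightarrow> 'k::{zero,one}" where
  "gr_one G g = (if g = \<one>\<^bsub>G\<^esub> then 1 else 0)"

definition grid :: "nat \<Rightarrow> nat \<Rightarrow> (nat \<times> nat) set" where
  "grid M N = {..<M} \<times> {..<N}"

definition same_block :: "'a set set \<Rightarrow> 'a \<Rightarrow> 'a \<Rightarrow> bool" where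
  "same_block P x y \<longleftrightarrow> (\<exists>B\<in>P. x \<in> B \<and> y \<in> B)"

definition refines :: "'a set set \<Rightarrow> 'a set set \<Rightarrow> bool" where
  "refines P Q \<longleftrightarrow> (\<forall>B\<in>P. \<exists>B'\<in>Q. B \<subseteq> B')"

definition realizable ::
  "(nat \<times> nat) set set \<Rightarrow> (nat \<Rightarrow> 'k::ring_1) \<Rightarrow> (nat \<Rightarrow> 'k) \<Rightarrow> bool" where
  "realizable P r s \<longleftrightarrow>
     (\<forall>E\<in>P. (\<Sum>(i, j)\<in>E. r i * s j) = (if (0, 0) \<in> E then 1 else 0))"

definition invariant_subgrid ::
  "(nat \<times> nat) set set \<Rightarrow> nat \<Rightarrow> nat \<Rightarrow> nat set \<Rightarrow> nat set \<Rightarrow> bool" where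
  "invariant_subgrid P M N R C \<longleftrightarrow>
     0 \<in> R \<and> R \<subseteq> {..<M} \<and> 0 \<in> C \<and> C \<subseteq> {..<N} \<and> card R \<ge> 2 \<and> card C \<ge> 2 \<and>
     (\<forall>i j i' j'. (i, j) \<in> R \<times> C \<and> same_block P (i, j) (i', j') \<longrightarrow> (i', j') \<in> R \<times> C)"

definition proper_invariant_subgrid ::
  "(nat \<times> nat) set set \<Rightarrow> nat \<Rightarrow> nat \<Rightarrow> nat set \<Rightarrow> nat set \<Rightarrow> bool" where
  "proper_invariant_subgrid P M N R C \<longleftrightarrow>
     invariant_subgrid P M N R C \<and> (card R < M \<or> card C < N)"

end

theory Submission imports Defs "HOL-Algebra.Generated_Groups" "HOL-Library.Countable_Set"
begin

lemma foldr_mult_append: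
  assumes "monoid G" "set l1 \<subseteq> carrier G" "set l2 \<subseteq> carrier G"
  shows "foldr (\<otimes>\<^bsub>G\<^esub>) (l1 @ l2) \<one>\<^bsub>G\<^esub> = foldr (\<otimes>\<^bsub>G\<^esub>) l1 \<one>\<^bsub>G\<^esub> \<otimes>\<^bsub>G\<^esub> foldr (\<otimes>\<^bsub>G\<^esub>) l2 \<one>\<^bsub>G\<^esub>"
proof -
  have cl: "set l \<subseteq> carrier G \<Longrightarrow> foldr (\<otimes>\<^bsub>G\<^esub>) l \<one>\<^bsub>G\<^esub> \<in> carrier G" for l
    by (induction l) (auto simp: monoid.m_closed[OF assms(1)] monoid.one_closed[OF assms(1)])
  show ?thesis using assms(2)
    by (induction l1) (auto simp: monoid.l_one[OF assms(1)] cl[OF assms(3)] cl monoid.m_assoc[OF assms(1)])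
qed

lemma countable_generate:
  assumes "group G" "finite A" "A \<subseteq> carrier G"
  shows "countable (generate G A)"
proof -
  let ?B = "A \<union> m_inv G ` A"
  have B: "?B \<subseteq> carrier G" using assms group.inv_closed[OF assms(1)] by auto
  have "generate G A \<subseteq> (\<lambda>l. foldr (\<otimes>\<^bsub>G\<^esub>) l \<one>\<^bsub>G\<^esub>) ` lists ?B"
  proof
    fix z assume "z \<in> generate G A"
    then show "z \<in> (\<lambda>l. foldr (\<otimes>\<^bsub>G\<^esub>) l \<one>\<^bsub>G\<^esub>) ` lists ?B"
    proof (induction rule: generate.induct)
      case one
      show ?case by (rule image_eqI[where x="[]"]) auto
    next
      case (incl h)
      then show ?case using assms group.is_monoid[OF assms(1)]
        by (intro image_eqI[where x="[h]"]) (auto simp: monoid.r_one)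
    next
      case (inv h)
      then show ?case using assms group.is_monoid[OF assms(1)] group.inv_closed[OF assms(1)]
        by (intro image_eqI[where x="[inv\<^bsub>G\<^esub> h]"]) (auto simp: monoid.r_one)
    next
      case (eng h1 h2)
      then obtain l1 l2 where "l1 \<in> lists ?B" "l2 \<in> lists ?B"
        "h1 = foldr (\<otimes>\<^bsub>G\<^esub>) l1 \<one>\<^bsub>G\<^esub>" "h2 = foldr (\<otimes>\<^bsub>G\<^esub>) l2 \<one>\<^bsub>G\<^esub>" by auto
      moreover have "set l1 \<subseteq> carrier G" "set l2 \<subseteq> carrier G"
        using B \<open>l1 \<in> lists ?B\<close> \<open>l2 \<in> lists ?B\<close> by blast+
      ultimately show ?case using foldr_mult_append[OF group.is_monoid[OF assms(1)], of l1 l2]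
        by (intro image_eqI[where x="l1 @ l2"]) auto
    qed
  qed
  moreover have "countable (lists ?B)" using assms(2) by (auto intro: countable_finite)
  ultimately show ?thesis by (meson countable_image countable_subset)
qed


lemma transport:
  fixes G :: "'g monoid" and S :: "'g set" and f :: "'g \<Rightarrow> nat" and x y :: "'g \<Rightarrow> 'k::ring_1"
  assumes grp: "group G" and sub: "subgroup S G" and tf: "torsion_free G" and inj: "inj_on f S"
    and xe: "grp_ring_elem G x" and ye: "grp_ring_elem G y"
    and xs: "gsupp x \<subseteq> S" and ys: "gsupp y \<subseteq> S"
    and prod: "gr_mult G x y = gr_one G"
  shows "\<exists>(H :: nat monoid) (x' :: nat \<Rightarrow> 'k) y'.
                 group H \<and> torsion_free H \<and> grp_ring_elem H x' \<and> grp_ring_elem H y' \<and>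
                 grank x' = grank x \<and> grank y' = grank y \<and> gr_mult H x' y' = gr_one H"
proof -
  define g where "g = inv_into S f"
  have gf[simp]: "u \<in> S \<Longrightarrow> g (f u) = u" for u unfolding g_def by (rule inv_into_f_f[OF inj])
  have fin: "u \<in> S \<Longrightarrow> v \<in> S \<Longrightarrow> f u = f v \<longleftrightarrow> u = v" for u v by (rule inj_on_eq_iff[OF inj])
  have Sm: "u \<in> S \<Longrightarrow> v \<in> S \<Longrightarrow> u \<otimes>\<^bsub>G\<^esub> v \<in> S" for u v by (rule subgroup.m_closed[OF sub])
  have S1: "\<one>\<^bsub>G\<^esub> \<in> S" by (rule subgroup.one_closed[OF sub])
  have Sinv: "u \<in> S \<Longrightarrow> inv\<^bsub>G\<^esub> u \<in> S" for u by (rule subgroup.m_inv_closed[OF sub])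
  have Sc: "u \<in> S \<Longrightarrow> u \<in> carrier G" for u using subgroup.subset[OF sub] by blast
  define H :: "nat monoid" where "H = \<lparr>carrier = f ` S, mult = (\<lambda>a b. f (g a \<otimes>\<^bsub>G\<^esub> g b)), one = f \<one>\<^bsub>G\<^esub>\<rparr>"
  have Hc[simp]: "carrier H = f ` S" and Hm[simp]: "a \<otimes>\<^bsub>H\<^esub> b = f (g a \<otimes>\<^bsub>G\<^esub> g b)" and H1[simp]: "\<one>\<^bsub>H\<^esub> = f \<one>\<^bsub>G\<^esub>"
    for a b by (simp_all add: H_def)
  have gH: "group H"
  proof (rule groupI)
    show "a \<otimes>\<^bsub>H\<^esub> b \<in> carrier H" if "a \<in> carrier H" "b \<in> carrier H" for a b
      using that Sm by auto
    show "\<one>\<^bsub>H\<^esub> \<in> carrier H" using S1 by simp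
    show "a \<otimes>\<^bsub>H\<^esub> b \<otimes>\<^bsub>H\<^esub> c = a \<otimes>\<^bsub>H\<^esub> (b \<otimes>\<^bsub>H\<^esub> c)"
      if "a \<in> carrier H" "b \<in> carrier H" "c \<in> carrier H" for a b c
      using that Sm Sc by (auto simp: group.is_monoid[OF grp] monoid.m_assoc)
    show "\<one>\<^bsub>H\<^esub> \<otimes>\<^bsub>H\<^esub> a = a" if "a \<in> carrier H" for a
      using that S1 Sc by (auto simp: group.is_monoid[OF grp] monoid.l_one)
    show "\<exists>b\<in>carrier H. b \<otimes>\<^bsub>H\<^esub> a = \<one>\<^bsub>H\<^esub>" if aH: "a \<in> carrier H" for a
    proof -
      obtain u where u: "u \<in> S" "a = f u" using aH unfolding Hc by blast
      show ?thesis using u Sinv Sc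
        by (intro bexI[where x="f (inv\<^bsub>G\<^esub> u)"]) (auto simp: group.l_inv[OF grp])
    qed
  qed
  have powH: "u \<in> S \<Longrightarrow> (f u) [^]\<^bsub>H\<^esub> n = f (u [^]\<^bsub>G\<^esub> n) \<and> u [^]\<^bsub>G\<^esub> n \<in> S" for u and n :: nat
  proof (induction n)
    case 0 then show ?case using S1 by simp
  next
    case (Suc n) then show ?case using Sm by simp
  qed
  have tfH: "torsion_free H"
    unfolding torsion_free_def
  proof (intro conjI gH ballI allI impI)
    fix a and n :: nat assume a: "a \<in> carrier H" and n: "0 < n \<and> a [^]\<^bsub>H\<^esub> n = \<one>\<^bsub>H\<^esub>"
    obtain u where u: "u \<in> S" "a = f u" using a by auto
    have "f (u [^]\<^bsub>G\<^esub> n) = f \<one>\<^bsub>G\<^esub>" using powH[OF u(1), of n] n u by simp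
    hence "u [^]\<^bsub>G\<^esub> n = \<one>\<^bsub>G\<^esub>" using fin powH[OF u(1), of n] S1 by blast
    hence "u = \<one>\<^bsub>G\<^esub>" using tf n Sc[OF u(1)] unfolding torsion_free_def by blast
    then show "a = \<one>\<^bsub>H\<^esub>" using u by simp
  qed
  define x' where "x' = (\<lambda>a. if a \<in> f ` S then x (g a) else 0)"
  define y' where "y' = (\<lambda>a. if a \<in> f ` S then y (g a) else 0)"
  have sx: "gsupp x' = f ` gsupp x"
    using xs by (auto simp: gsupp_def x'_def subset_iff fin)
  have sy: "gsupp y' = f ` gsupp y"
    using ys by (auto simp: gsupp_def y'_def subset_iff fin)
  have xfin: "finite (gsupp x)" and yfin: "finite (gsupp y)" using xe ye by (auto simp: grp_ring_elem_def)
  have ex': "grp_ring_elem H x'" "grp_ring_elem H y'"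
    unfolding grp_ring_elem_def sx sy Hc using xfin yfin xs ys by (simp_all add: image_mono)
  have rk: "grank x' = grank x" "grank y' = grank y"
    unfolding grank_def sx sy by (rule card_image, rule inj_on_subset[OF inj xs], rule card_image, rule inj_on_subset[OF inj ys])
  have pr: "gr_mult H x' y' = gr_one H"
  proof
    fix a
    show "gr_mult H x' y' a = gr_one H a"
    proof (cases "a \<in> f ` S")
      case False
      have E: "{(h, k). h \<in> gsupp x' \<and> k \<in> gsupp y' \<and> h \<otimes>\<^bsub>H\<^esub> k = a} = {}"
      proof -
        have "h \<otimes>\<^bsub>H\<^esub> k \<in> f ` S" if hk: "h \<in> gsupp x'" "k \<in> gsupp y'" for h k
        proof -
          obtain u v where "u \<in> gsupp x" "v \<in> gsupp y" "h = f u" "k = f v" using hk sx sy by auto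
          then have "u \<in> S" "v \<in> S" "h = f u" "k = f v" using xs ys by auto
          then show ?thesis using Sm by simp
        qed
        then show ?thesis using False by blast
      qed
      have "a \<noteq> f \<one>\<^bsub>G\<^esub>" using False S1 by auto
      then have "gr_one H a = 0" by (simp add: gr_one_def)
      moreover have "gr_mult H x' y' a = 0" unfolding gr_mult_def E by simp
      ultimately show ?thesis by simp
    next
      case True
      then obtain b where b: "b \<in> S" "a = f b" by auto
      let ?PG = "{(h, k). h \<in> gsupp x \<and> k \<in> gsupp y \<and> h \<otimes>\<^bsub>G\<^esub> k = b}"
      have eq: "{(h, k). h \<in> gsupp x' \<and> k \<in> gsupp y' \<and> h \<otimes>\<^bsub>H\<^esub> k = a} = map_prod f f ` ?PG"
      proof (intro Set.set_eqI iffI)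
        fix p assume "p \<in> {(h, k). h \<in> gsupp x' \<and> k \<in> gsupp y' \<and> h \<otimes>\<^bsub>H\<^esub> k = a}"
        then obtain u v where uv0: "p = (f u, f v)" "u \<in> gsupp x" "v \<in> gsupp y" "f (g (f u) \<otimes>\<^bsub>G\<^esub> g (f v)) = f b"
          using sx sy b by auto
        have "u \<in> S" "v \<in> S" using uv0 xs ys by auto
        then have uv: "p = (f u, f v)" "u \<in> gsupp x" "v \<in> gsupp y" "f (u \<otimes>\<^bsub>G\<^esub> v) = f b"
          using uv0 by auto
        have "u \<otimes>\<^bsub>G\<^esub> v = b" using uv(4) fin Sm b xs ys uv(2,3) by blast
        then show "p \<in> map_prod f f ` ?PG" using uv by force
      next
        fix p assume "p \<in> map_prod f f ` ?PG"
        then obtain u v where uv: "p = (f u, f v)" "u \<in> gsupp x" "v \<in> gsupp y" "u \<otimes>\<^bsub>G\<^esub> v = b" by auto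
        moreover have "u \<in> S" "v \<in> S" using uv xs ys by auto
        ultimately show "p \<in> {(h, k). h \<in> gsupp x' \<and> k \<in> gsupp y' \<and> h \<otimes>\<^bsub>H\<^esub> k = a}"
          using sx sy b by auto
      qed
      have injp: "inj_on (map_prod f f) ?PG"
        using inj xs ys unfolding inj_on_def by (auto simp: subset_iff)
      have "gr_mult H x' y' a = (\<Sum>p\<in>?PG. x' (f (fst p)) * y' (f (snd p)))"
        unfolding gr_mult_def eq sum.reindex[OF injp] comp_def by simp
      also have "\<dots> = (\<Sum>p\<in>?PG. x (fst p) * y (snd p))"
      proof (rule sum.cong[OF refl])
        fix p assume "p \<in> ?PG"
        then have "fst p \<in> S" "snd p \<in> S" using xs ys by auto
        then show "x' (f (fst p)) * y' (f (snd p)) = x (fst p) * y (snd p)"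
          by (simp add: x'_def y'_def imageI)
      qed
      also have "\<dots> = gr_mult G x y b" by (simp add: gr_mult_def)
      also have "\<dots> = gr_one H a" using prod b fin S1 by (simp add: gr_one_def)
      finally show ?thesis .
    qed
  qed
  show ?thesis using gH tfH ex' rk pr by blast
qed


theorem lemma6p9:
  fixes G :: "'g monoid"
    and c d :: "'g \<Rightarrow> 'k::division_ring"
    and M N :: nat
    and cc dd :: "nat \<Rightarrow> 'g"
    and r s :: "nat \<Rightarrow> 'k"
    and \<sigma> \<pi> :: "(nat \<times> nat) set set"
  assumes "M \<ge> 2" and "N \<ge> 2"
    and "group G" and "torsion_free G"
    and "grp_ring_elem G c" and "grp_ring_elem G d"
    and "grank c = M" and "grank d = N"
    and "c \<one>\<^bsub>G\<^esub> \<noteq> 0" and "d \<one>\<^bsub>G\<^esub> \<noteq> 0"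
    and "gr_mult G c d = gr_one G"
    and "inj_on cc {..<M}" and "cc ` {..<M} = gsupp c" and "cc 0 = \<one>\<^bsub>G\<^esub>"
    and "inj_on dd {..<N}" and "dd ` {..<N} = gsupp d" and "dd 0 = \<one>\<^bsub>G\<^esub>"
    and "\<forall>i<M. r i = c (cc i)" and "\<forall>j<N. s j = d (dd j)"
    and "partition_on (grid M N) \<sigma>"
    and "\<forall>i j i' j'. (i, j) \<in> grid M N \<and> (i', j') \<in> grid M N \<longrightarrow>
           (same_block \<sigma> (i, j) (i', j') \<longleftrightarrow>
            cc i \<otimes>\<^bsub>G\<^esub> dd j = cc i' \<otimes>\<^bsub>G\<^esub> dd j')"
    and "partition_on (grid M N) \<pi>" and "refines \<pi> \<sigma>"
    and "realizable \<pi> r s"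
    and "\<forall>m n. 2 \<le> m \<and> m \<le> M \<and> 2 \<le> n \<and> n \<le> N \<and> (m, n) \<noteq> (M, N) \<longrightarrow>
           \<not> (\<exists>(H :: nat monoid) (x :: nat \<Rightarrow> 'k) y.
                 group H \<and> torsion_free H \<and> grp_ring_elem H x \<and> grp_ring_elem H y \<and>
                 grank x = m \<and> grank y = n \<and> gr_mult H x y = gr_one H)"
  shows "\<not> (\<exists>R C. proper_invariant_subgrid \<pi> M N R C)"
proof
  note A = assms
  assume "\<exists>R C. proper_invariant_subgrid \<pi> M N R C"
  then obtain R C where RC: "proper_invariant_subgrid \<pi> M N R C" by blast
  have R0: "0 \<in> R" and RM: "R \<subseteq> {..<M}" and C0: "0 \<in> C" and CN: "C \<subseteq> {..<N}"
    and R2: "card R \<ge> 2" and C2: "card C \<ge> 2"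
    and invR: "\<And>i j i' j'. (i, j) \<in> R \<times> C \<Longrightarrow> same_block \<pi> (i, j) (i', j') \<Longrightarrow> (i', j') \<in> R \<times> C"
    and prp: "card R < M \<or> card C < N"
    using RC unfolding proper_invariant_subgrid_def invariant_subgrid_def by blast+
  have finR: "finite R" and finC: "finite C" using RM CN finite_subset by blast+
  have grpc: "gsupp c \<subseteq> carrier G" "finite (gsupp c)" and grpd: "gsupp d \<subseteq> carrier G" "finite (gsupp d)"
    using A(5,6) unfolding grp_ring_elem_def by blast+
  define x where "x = (\<lambda>h. if h \<in> cc ` R then c h else 0)"
  define y where "y = (\<lambda>h. if h \<in> dd ` C then d h else 0)"
  have ccR: "cc ` R \<subseteq> gsupp c" using RM A(13) by blast
  have ddC: "dd ` C \<subseteq> gsupp d" using CN A(16) by blast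
  have sx: "gsupp x = cc ` R" using ccR by (auto simp: gsupp_def x_def)
  have sy: "gsupp y = dd ` C" using ddC by (auto simp: gsupp_def y_def)
  have xe: "grp_ring_elem G x" unfolding grp_ring_elem_def sx using ccR grpc finR by blast
  have ye: "grp_ring_elem G y" unfolding grp_ring_elem_def sy using ddC grpd finC by blast
  have injR: "inj_on cc R" using inj_on_subset[OF A(12) RM] .
  have injC: "inj_on dd C" using inj_on_subset[OF A(15) CN] .
  have rkx: "grank x = card R" unfolding grank_def sx using card_image[OF injR] .
  have rky: "grank y = card C" unfolding grank_def sy using card_image[OF injC] .
  have prod: "gr_mult G x y = gr_one G"
  proof
    fix g
    define T where "T = {p \<in> R \<times> C. cc (fst p) \<otimes>\<^bsub>G\<^esub> dd (snd p) = g}"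
    have RCg: "R \<times> C \<subseteq> grid M N" using RM CN unfolding grid_def by blast
    have Tsub: "T \<subseteq> R \<times> C" unfolding T_def by blast
    have step1: "gr_mult G x y g = (\<Sum>(i, j)\<in>T. r i * s j)"
    proof -
      have P: "{(h, k). h \<in> gsupp x \<and> k \<in> gsupp y \<and> h \<otimes>\<^bsub>G\<^esub> k = g} = map_prod cc dd ` T"
        unfolding sx sy T_def by force
      have inj: "inj_on (map_prod cc dd) T"
        using inj_on_subset[OF map_prod_inj_on[OF injR injC] Tsub] .
      have "gr_mult G x y g = (\<Sum>p\<in>T. x (cc (fst p)) * y (dd (snd p)))"
        unfolding gr_mult_def P sum.reindex[OF inj] comp_def by simp
      also have "\<dots> = (\<Sum>(i, j)\<in>T. r i * s j)"
      proof (rule sum.cong[OF refl])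
        fix p assume "p \<in> T"
        then have p: "fst p \<in> R" "snd p \<in> C" using Tsub by auto
        then have "fst p < M" "snd p < N" using RM CN by auto
        then have "r (fst p) = c (cc (fst p))" "s (snd p) = d (dd (snd p))" using A(18) A(19) by blast+
        then show "x (cc (fst p)) * y (dd (snd p)) = (case p of (i, j) \<Rightarrow> r i * s j)"
          using p by (simp add: x_def y_def imageI case_prod_beta)
      qed
      finally show ?thesis .
    qed
    have piU: "\<Union>\<pi> = grid M N" using partition_onD1[OF A(22)] by simp
    have pidisj: "disjoint \<pi>" using partition_onD2[OF A(22)] .
    have fing: "finite (grid M N)" by (simp add: grid_def)
    have finpi: "finite \<pi>"
    proof -
      have "\<pi> \<subseteq> Pow (grid M N)" using piU by blast
      then show ?thesis using fing by (meson finite_Pow_iff finite_subset)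
    qed
    have finE: "finite E" if Ep: "E \<in> \<pi>" for E
    proof -
      have "E \<subseteq> grid M N" using Ep piU by blast
      then show ?thesis using fing finite_subset by blast
    qed
    have closed: "q \<in> T" if E: "E \<in> \<pi>" "p \<in> E" "p \<in> T" "q \<in> E" for E p q
    proof -
      obtain i j where pij: "p = (i, j)" by force
      obtain i' j' where qij: "q = (i', j')" by force
      have sb: "same_block \<pi> (i, j) (i', j')" unfolding same_block_def using E pij qij by blast
      have pRC: "(i, j) \<in> R \<times> C" using E(3) Tsub pij by blast
      have qRC: "(i', j') \<in> R \<times> C" using invR[OF pRC sb] .
      obtain B' where B': "B' \<in> \<sigma>" "E \<subseteq> B'" using A(23) E(1) unfolding refines_def by blast
      have "same_block \<sigma> (i, j) (i', j')" unfolding same_block_def using B' E pij qij by blast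
      moreover have "(i, j) \<in> grid M N" "(i', j') \<in> grid M N" using pRC qRC RCg by blast+
      ultimately have "cc i \<otimes>\<^bsub>G\<^esub> dd j = cc i' \<otimes>\<^bsub>G\<^esub> dd j'" using A(21) by blast
      then show ?thesis using E(3) qRC pij qij unfolding T_def by simp
    qed
    have "(0, 0) \<in> grid M N" using A(1) A(2) unfolding grid_def by simp
    then obtain E0 where E0: "E0 \<in> \<pi>" "(0, 0) \<in> E0" using piU by blast
    have uniq: "E = E0" if "E \<in> \<pi>" "(0, 0) \<in> E" for E
      using disjointD[OF pidisj that(1) E0(1)] that(2) E0(2) by blast
    have one: "cc 0 \<otimes>\<^bsub>G\<^esub> dd 0 = \<one>\<^bsub>G\<^esub>"
      unfolding A(14) A(17) by (rule monoid.l_one[OF group.is_monoid[OF A(3)] monoid.one_closed[OF group.is_monoid[OF A(3)]]])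
    have T0: "(0, 0) \<in> T \<longleftrightarrow> g = \<one>\<^bsub>G\<^esub>"
      unfolding T_def using R0 C0 one by auto
    have TU: "T = (\<Union>E\<in>\<pi>. E \<inter> T)"
    proof
      show "T \<subseteq> (\<Union>E\<in>\<pi>. E \<inter> T)"
      proof
        fix p assume pT: "p \<in> T"
        then have "p \<in> \<Union>\<pi>" using Tsub RCg piU by blast
        then obtain E where "E \<in> \<pi>" "p \<in> E" by blast
        then show "p \<in> (\<Union>E\<in>\<pi>. E \<inter> T)" using pT by blast
      qed
      show "(\<Union>E\<in>\<pi>. E \<inter> T) \<subseteq> T" by blast
    qed
    have djs: "\<forall>E\<in>\<pi>. \<forall>E'\<in>\<pi>. E \<noteq> E' \<longrightarrow> (E \<inter> T) \<inter> (E' \<inter> T) = {}"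
      using pidisj unfolding disjoint_def by blast
    have finET: "\<forall>E\<in>\<pi>. finite (E \<inter> T)" using finE by blast
    have "(\<Sum>(i, j)\<in>T. r i * s j) = (\<Sum>(i, j)\<in>(\<Union>E\<in>\<pi>. E \<inter> T). r i * s j)"
      by (rule arg_cong[OF TU])
    also have "\<dots> = (\<Sum>E\<in>\<pi>. \<Sum>(i, j)\<in>E \<inter> T. r i * s j)"
      by (rule sum.UNION_disjoint[OF finpi finET djs])
    also have "\<dots> = (\<Sum>E\<in>\<pi>. if E = E0 then (if (0, 0) \<in> T then 1 else 0) else 0)"
    proof (rule sum.cong[OF refl])
      fix E assume E: "E \<in> \<pi>"
      show "(\<Sum>(i, j)\<in>E \<inter> T. r i * s j) = (if E = E0 then (if (0, 0) \<in> T then 1 else 0) else 0)"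
      proof (cases "E \<inter> T = {}")
        case True
        then have "E = E0 \<Longrightarrow> (0, 0) \<notin> T" using E0(2) by blast
        then show ?thesis using True by auto
      next
        case False
        then obtain p where p: "p \<in> E" "p \<in> T" by blast
        have ET: "E \<inter> T = E" using closed[OF E p] by blast
        have re: "(\<Sum>(i, j)\<in>E. r i * s j) = (if (0, 0) \<in> E then 1 else 0)"
          using A(24) E unfolding realizable_def by blast
        show ?thesis
        proof (cases "(0, 0) \<in> E")
          case True
          then have "E = E0" using uniq E by blast
          moreover have "(0, 0) \<in> T" using closed[OF E p True] .
          ultimately show ?thesis using re ET True by simp
        next
          case False
          then have "E \<noteq> E0" using E0(2) by blast
          then show ?thesis using re ET False by simp
        qed
      qed
    qed
    also have "\<dots> = (if (0, 0) \<in> T then 1 else 0)"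
      using sum.delta[OF finpi, of E0 "\<lambda>_. if (0, 0) \<in> T then (1::'k) else 0"] E0(1) by simp
    finally show "gr_mult G x y g = gr_one G g"
      using step1 T0 by (simp add: gr_one_def)
  qed
  define S where "S = generate G (gsupp x \<union> gsupp y)"
  have Ssub: "gsupp x \<union> gsupp y \<subseteq> carrier G" using xe ye unfolding grp_ring_elem_def by blast
  have subS: "subgroup S G" unfolding S_def by (rule group.generate_is_subgroup[OF A(3) Ssub])
  have cS: "countable S" unfolding S_def
    by (rule countable_generate[OF A(3) _ Ssub]) (use xe ye in \<open>auto simp: grp_ring_elem_def\<close>)
  have "gsupp x \<union> gsupp y \<subseteq> S" unfolding S_def by (rule subsetI, erule generate.incl)
  then have xS: "gsupp x \<subseteq> S" "gsupp y \<subseteq> S" by auto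
  obtain H :: "nat monoid" and x' y' :: "nat \<Rightarrow> 'k" where Hf:
    "group H \<and> torsion_free H \<and> grp_ring_elem H x' \<and> grp_ring_elem H y' \<and>
     grank x' = grank x \<and> grank y' = grank y \<and> gr_mult H x' y' = gr_one H"
    using transport[OF A(3) subS A(4) inj_on_to_nat_on[OF cS] xe ye xS prod] by blast
  have ex: "\<exists>(H :: nat monoid) (x :: nat \<Rightarrow> 'k) y.
                 group H \<and> torsion_free H \<and> grp_ring_elem H x \<and> grp_ring_elem H y \<and>
                 grank x = card R \<and> grank y = card C \<and> gr_mult H x y = gr_one H"
    apply (rule exI[of _ H], rule exI[of _ x'], rule exI[of _ y'])
    using Hf rkx rky by simp
  have "card R \<le> M" using card_mono[OF _ RM] by simp
  moreover have "card C \<le> N" using card_mono[OF _ CN] by simp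
  moreover have "(card R, card C) \<noteq> (M, N)" using prp by auto
  ultimately have cnd: "2 \<le> card R \<and> card R \<le> M \<and> 2 \<le> card C \<and> card C \<le> N \<and> (card R, card C) \<noteq> (M, N)"
    using R2 C2 by simp
  have "\<not> (\<exists>(H :: nat monoid) (x :: nat \<Rightarrow> 'k) y.
                 group H \<and> torsion_free H \<and> grp_ring_elem H x \<and> grp_ring_elem H y \<and>
                 grank x = card R \<and> grank y = card C \<and> gr_mult H x y = gr_one H)"
    using spec[OF spec[OF A(25), of "card R"], of "card C"] cnd by (rule mp)
  then show False using ex by (rule notE)
qed

end
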